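(* Let $k\ge 10$, and consider the procedure $\mathcal{A}$ (described in the context) started on an input $(\mathcal{L},\ell,\tau)$ with $\mathrm{rank}(\mathcal{L})=n\ge k$, $\tau\ge 0$ and $1\le\ell\le n-k+1$. Then every invocation $\mathcal{A}(\mathcal{L}_0,\ell_0,\tau_0)$ occurring in the recursion, with $n_0:=\mathrm{rank}(\mathcal{L}_0)$, satisfies $n_0\ge k$, $1\le\ell_0<n_0$, and \[ \min\{\ell_0,\;n_0-\ell_0\}\le n_0-k+1 . \] In particular, every invocation with $n_0=k$ has $\ell_0\in\{1,k-1\}$.
   Context: Notation: for a lattice $\mathcal{L}$, $\mathcal{L}^*$ is its dual lattice, and for a lattice $\mathcal{M}$, $\mathcal{M}^\perp$ is the orthogonal complement of $\mathrm{span}(\mathcal{M})$; for a rank-$r$ sublattice $\mathcal{M}\subseteq \mathcal{L}^*$, $\mathcal{L}\cap\mathcal{M}^\perp$ has rank $\mathrm{rank}(\mathcal{L})-r$. Sublattices returned by $\mathcal{A}(\mathcal{L},\ell,\tau)$ have rank $\ell$. Procedure $\mathcal{A}(\mathcal{L},\ell,\tau)$, with $n:=\mathrm{rank}(\mathcal{L})$ and $n>\ell\ge1$, $\tau\ge 0$ integers: 1. Duality step: if $\max\{1,(n-k)/5\}<\ell<n/2$ or $\ell\ge n-\max\{1,(n-k)/10\}$, output $\mathcal{L}\cap\mathcal{A}(\mathcal{L}^*,n-\ell,\tau)^\perp$. 2. Base cases: (a) if $n=k$ and $\ell=1$, call an HSVP oracle on $\mathcal{L}$ and output the lattice generated by the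 returned vector; (b) if $\tau=0$, output the lattice generated by the first $\ell$ vectors of an LLL-reduced basis of $\mathcal{L}$. 3. Recursive step: otherwise set $\ell^*=\lceil (n-k)/20\rceil$, $b=1$ if $\ell<n/2$ and $b=0$ otherwise, compute $\mathcal{M}:=\mathcal{A}(\mathcal{L}^*,\ell^*,\tau-b)$ and output $\mathcal{A}(\mathcal{L}\cap\mathcal{M}^\perp,\ell,\tau)$. The sequence of parameters $(n,\ell,\tau)$ of the invocations depends only on the initial parameters. *)

theory Defs
  imports Complex_Main
begin

text \<open>Only the parameters (n, l, tau) = (rank, target rank, recursion budget) of the
invocations of procedure A matter; they depend only on the initial parameters.
An invocation A(L, l, tau) with rank L = n is represented by the triple (n, l, tau).\<close>

definition dual_cond :: "nat \<Rightarrow> nat \<Rightarrow> nat \<Rightarrow> bool" where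
  "dual_cond k n l \<longleftrightarrow>
     (max 1 ((real n - real k) / 5) < real l \<and> real l < real n / 2)
   \<or> real l \<ge> real n - max 1 ((real n - real k) / 10)"

definition base_cond :: "nat \<Rightarrow> nat \<Rightarrow> nat \<Rightarrow> nat \<Rightarrow> bool" where
  "base_cond k n l \<tau> \<longleftrightarrow> (n = k \<and> l = 1) \<or> \<tau> = 0"

definition lstar :: "nat \<Rightarrow> nat \<Rightarrow> nat" where
  "lstar k n = nat \<lceil>(real n - real k) / 20\<rceil>"

definition bbit :: "nat \<Rightarrow> nat \<Rightarrow> nat" where
  "bbit n l = (if real l < real n / 2 then 1 else 0)"

text \<open>calls k P Q: the invocation with parameters P directly invokes one with parameters Q.
Dual lattice has the same rank n; L \<inter> M^perp has rank n - lstar.\<close>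
inductive calls :: "nat \<Rightarrow> nat \<times> nat \<times> nat \<Rightarrow> nat \<times> nat \<times> nat \<Rightarrow> bool" for k where
  dual: "dual_cond k n l \<Longrightarrow> calls k (n, l, \<tau>) (n, n - l, \<tau>)"
| rec1: "\<not> dual_cond k n l \<Longrightarrow> \<not> base_cond k n l \<tau> \<Longrightarrow>
         calls k (n, l, \<tau>) (n, lstar k n, \<tau> - bbit n l)"
| rec2: "\<not> dual_cond k n l \<Longrightarrow> \<not> base_cond k n l \<tau> \<Longrightarrow>
         calls k (n, l, \<tau>) (n - lstar k n, l, \<tau>)"

end

theory Submission
  imports Defs
begin

definition Inv :: "nat \<Rightarrow> nat \<Rightarrow> nat \<Rightarrow> bool" where
  "Inv k n l \<longleftrightarrow> k \<le> n \<and> 1 \<le> l \<and> l < n \<and> min l (n - l) \<le> n - k + 1"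

lemma nk_gt:
  assumes k: "k \<ge> 10" and I: "Inv k n l" and nd: "\<not> dual_cond k n l"
    and nb: "\<not> base_cond k n l t"
  shows "n > k"
proof (rule ccontr)
  assume "\<not> n > k"
  with I have nk: "n = k" by (simp add: Inv_def)
  with I have "l = 1 \<or> l = k - 1" by (auto simp: Inv_def min_def split: if_splits)
  moreover have "l \<noteq> 1" using nb nk by (simp add: base_cond_def)
  moreover have "\<not> real l \<ge> real n - 1" using nd nk by (simp add: dual_cond_def)
  ultimately show False using nk k by auto
qed

lemma lstar_bounds:
  assumes "n > k"
  shows "real (lstar k n) \<ge> (real n - real k) / 20" "real (lstar k n) < (real n - real k) / 20 + 1"
    "lstar k n \<ge> 1"
proof -
  have c: "real_of_int \<lceil>(real n - real k) / 20\<rceil> \<ge> (real n - real k) / 20"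
    "real_of_int \<lceil>(real n - real k) / 20\<rceil> < (real n - real k) / 20 + 1"
    by (simp_all add: ceiling_correct) linarith
  have pos: "\<lceil>(real n - real k) / 20\<rceil> \<ge> 1" using assms by simp
  then have e: "real (lstar k n) = real_of_int \<lceil>(real n - real k) / 20\<rceil>"
    by (simp add: lstar_def)
  show "real (lstar k n) \<ge> (real n - real k) / 20" "real (lstar k n) < (real n - real k) / 20 + 1"
    using c e by simp_all
  show "lstar k n \<ge> 1" using pos unfolding lstar_def by linarith
qed

lemma step:
  assumes k: "k \<ge> 10" and I: "Inv k n l" and c: "calls k (n, l, t) (n', l', t')"
  shows "Inv k n' l'"
  using c
proof cases
  case dual
  then show ?thesis using I by (auto simp: Inv_def min_def split: if_splits)
next
  case rec1
  have gt: "n > k" using nk_gt[OF k I] rec1 by blast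
  note b = lstar_bounds[OF gt]
  have "real n - real k \<ge> 1" using gt by simp
  then have "real (lstar k n) < real n - real k + 1" using b(2) by (simp add: field_simps)
  then have "lstar k n \<le> n - k" using gt by linarith
  then show ?thesis using rec1 b(3) gt k by (auto simp: Inv_def)
next
  case rec2
  have gt: "n > k" using nk_gt[OF k I] rec2 by blast
  note b = lstar_bounds[OF gt]
  define s where "s = lstar k n"
  define m where "m = n - k"
  have mr: "real m = real n - real k" using gt by (simp add: m_def)
  have s1: "real s \<ge> real m / 20" "real s < real m / 20 + 1" "s \<ge> 1"
    using b mr by (simp_all add: s_def)
  have sm: "s \<le> m" using s1 by linarith
  have l1: "1 \<le> l" "l < n" and mn: "min l (n - l) \<le> m + 1" using I by (auto simp: Inv_def m_def)
  have nd: "\<not> ((max 1 (real m / 5) < real l \<and> real l < real n / 2)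
      \<or> real l \<ge> real n - max 1 (real m / 10))"
    using rec2 unfolding dual_cond_def mr by blast
  have nn: "n = k + m" using gt by (simp add: m_def)
  show ?thesis
  proof (cases "real l < real n / 2")
    case True
    then have lb: "real l \<le> max 1 (real m / 5)" using nd by auto
    have "real l \<le> real m - real s + 1"
    proof (cases "real m / 5 \<le> 1")
      case True
      then have "real l \<le> 1" using lb by simp
      moreover have "real s \<le> real m" using sm by simp
      ultimately show ?thesis by linarith
    next
      case False
      then have "real l \<le> real m / 5" using lb by simp
      moreover have "real m / 5 \<le> real m - real s + 1" using s1(2) False by (simp add: field_simps)
      ultimately show ?thesis by linarith
    qed
    then have "l \<le> m - s + 1" using sm by linarith
    moreover have "l < n - s" using \<open>l \<le> m - s + 1\<close> sm nn k by linarith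
    ultimately show ?thesis using rec2 l1 sm nn
      by (auto simp: Inv_def s_def min_def)
  next
    case False
    have a: "real n - real l > max 1 (real m / 10)" using nd by auto
    have "n - l > s"
    proof (cases "m \<le> 20")
      case True
      then have "s \<le> 1" using s1 by linarith
      moreover have "n - l \<ge> 2" using a l1 by auto
      ultimately show ?thesis by linarith
    next
      case f: False
      have "real m / 10 \<ge> real m / 20 + 1" using f by simp
      then have "real n - real l > real s" using a s1 by auto
      then show ?thesis using l1 by linarith
    qed
    moreover have "n - l \<le> l" using False l1 by linarith
    then have "n - l \<le> m + 1" using mn by (simp add: min_def split: if_splits)
    ultimately show ?thesis using rec2 l1 sm nn
      by (auto simp: Inv_def s_def min_def)
  qed
qed

theorem mainTheorem2:
  fixes k n l \<tau> n0 l0 \<tau>0 :: nat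
  assumes "k \<ge> 10" and "n \<ge> k" and "1 \<le> l" and "l \<le> n - k + 1"
    and "(calls k)\<^sup>*\<^sup>* (n, l, \<tau>) (n0, l0, \<tau>0)"
  shows "n0 \<ge> k \<and> 1 \<le> l0 \<and> l0 < n0 \<and> min l0 (n0 - l0) \<le> n0 - k + 1
         \<and> (n0 = k \<longrightarrow> l0 \<in> {1, k - 1})"
proof -
  have "Inv k n0 l0" using assms(5)
  proof -
    have "\<And>q. (calls k)\<^sup>*\<^sup>* (n, l, \<tau>) q \<Longrightarrow> Inv k (fst q) (fst (snd q))"
    proof -
      fix q assume "(calls k)\<^sup>*\<^sup>* (n, l, \<tau>) q"
      then show "Inv k (fst q) (fst (snd q))"
      proof (induction rule: rtranclp_induct)
        case base
        then show ?case using assms(1-4) by (auto simp: Inv_def)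
      next
        case (step y z)
        obtain a b c where y: "y = (a, b, c)" by (cases y) auto
        obtain a' b' c' where z: "z = (a', b', c')" by (cases z) auto
        show ?case using step y z Submission.step[OF assms(1)] by auto
      qed
    qed
    from this[OF assms(5)] show ?thesis by simp
  qed
  then show ?thesis using assms(1) by (auto simp: Inv_def min_def split: if_splits)
qed

end
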